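(* Let $G$ be a simple graph with $m$ edges and $t$ triangles, let $\epsilon\in(0,1)$, let $\widetilde{\alpha}$ be a positive integer and $\widetilde{t}>0$. Set $\gamma=\max\{\widetilde{\alpha},\widetilde{t}^{1/3}\}$, $\tau_d=\frac{8m\gamma^2}{\epsilon\widetilde{t}}$ and $\tau_t=12\gamma/\epsilon$. Let $H_d=\{e\in E: d(e)>\tau_d\}$ and $H_t=\{e\in E: t(e)>\tau_t\}$. If $\widetilde{\alpha}>\alpha(G)$ and $\widetilde{t}\in[t/4,t]$, then $|H_d|\le(\epsilon\widetilde{t})^{2/3}$ and $|H_t|\le(\epsilon\widetilde{t})^{2/3}$.
   Context: For an edge $e=\{u,v\}$, its degree is $d(e)=\min\{d(u),d(v)\}$, and $t(e)$ is the number of triangles of $G$ containing $e$. The arboricity $\alpha(G)$ is the minimum number of forests needed to cover the edge set of $G$. *)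

theory Defs
  imports Complex_Main
begin

text \<open>A finite simple graph is given by its edge set E: a finite set of
  two-element vertex sets. (Isolated vertices do not affect any quantity here.)\<close>
definition simple_graph :: "'a set set \<Rightarrow> bool" where
  "simple_graph E \<longleftrightarrow> finite E \<and> (\<forall>e\<in>E. \<exists>u v. u \<noteq> v \<and> e = {u, v})"

definition vdeg :: "'a set set \<Rightarrow> 'a \<Rightarrow> nat" where
  "vdeg E v = card {e \<in> E. v \<in> e}"

definition edeg :: "'a set set \<Rightarrow> 'a set \<Rightarrow> nat" where
  "edeg E e = Min (vdeg E ` e)"

definition triangles :: "'a set set \<Rightarrow> 'a set set" where
  "triangles E = {T. card T = 3 \<and> (\<forall>x\<in>T. \<forall>y\<in>T. x \<noteq> y \<longrightarrow> {x, y} \<in> E)}"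

definition etri :: "'a set set \<Rightarrow> 'a set \<Rightarrow> nat" where
  "etri E e = card {T \<in> triangles E. e \<subseteq> T}"

definition has_cycle :: "'a set set \<Rightarrow> bool" where
  "has_cycle F \<longleftrightarrow> (\<exists>vs. length vs \<ge> 3 \<and> distinct vs \<and>
      (\<forall>i < length vs. {vs ! i, vs ! ((i + 1) mod length vs)} \<in> F))"

definition forest :: "'a set set \<Rightarrow> bool" where
  "forest F \<longleftrightarrow> \<not> has_cycle F"

definition arboricity :: "'a set set \<Rightarrow> nat" where
  "arboricity E = (LEAST k. \<exists>Fs :: nat \<Rightarrow> 'a set set.
      (\<forall>i<k. forest (Fs i) \<and> Fs i \<subseteq> E) \<and> E = (\<Union>i<k. Fs i))"

end

theory Submission
  imports Defs
begin


definition gpath :: "'a set set \<Rightarrow> 'a set \<Rightarrow> 'a list \<Rightarrow> bool" where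
  "gpath F V p \<longleftrightarrow> p \<noteq> [] \<and> distinct p \<and> set p \<subseteq> V \<and>
     (\<forall>i. Suc i < length p \<longrightarrow> {p ! i, p ! Suc i} \<in> F)"

lemma mindeg_cycle:
  assumes fin: "finite V" and V: "\<Union>F \<subseteq> V" and v0: "v0 \<in> V"
    and edges: "\<forall>e\<in>F. \<exists>u v. u \<noteq> v \<and> e = {u, v}"
    and deg: "\<forall>v\<in>V. card {e \<in> F. v \<in> e} \<ge> 2"
  shows "has_cycle F"
proof -
  have a1: "\<exists>p. gpath F V p \<and> length p = 1"
    by (rule exI[of _ "[v0]"]) (simp add: gpath_def v0)
  have a2: "\<forall>y. (\<exists>p. gpath F V p \<and> length p = y) \<longrightarrow> y \<le> card V"
  proof (intro allI impI)
    fix y assume "\<exists>p. gpath F V p \<and> length p = y"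
    then obtain q where q: "gpath F V q" "length q = y" by blast
    then have "card (set q) = y" using distinct_card unfolding gpath_def by blast
    moreover have "card (set q) \<le> card V" using q fin unfolding gpath_def by (intro card_mono) auto
    ultimately show "y \<le> card V" by simp
  qed
  have "\<exists>n. (\<exists>p. gpath F V p \<and> length p = n) \<and> (\<forall>y. (\<exists>p. gpath F V p \<and> length p = y) \<longrightarrow> y \<le> n)"
    using Nat.ex_has_greatest_nat[where P="\<lambda>n. \<exists>p. gpath F V p \<and> length p = n", OF a1 a2] .
  then obtain p where p: "gpath F V p" and pmax: "\<And>q. gpath F V q \<Longrightarrow> length q \<le> length p"
    by blast
  define x where "x = p ! 0"
  have xV: "x \<in> V" using p unfolding x_def gpath_def by (simp add: subset_iff)
  have ext: "y \<in> set p" if "{x, y} \<in> F" for y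
  proof (rule ccontr)
    assume ny: "y \<notin> set p"
    have yV: "y \<in> V" using that V by blast
    have "gpath F V (y # p)"
    proof -
      have "\<forall>i. Suc i < length (y # p) \<longrightarrow> {(y # p) ! i, (y # p) ! Suc i} \<in> F"
      proof (intro allI impI)
        fix i assume "Suc i < length (y # p)"
        then show "{(y # p) ! i, (y # p) ! Suc i} \<in> F"
          using p that unfolding gpath_def x_def by (cases i) (auto simp: insert_commute)
      qed
      then show ?thesis using p ny yV unfolding gpath_def by auto
    qed
    then show False using pmax[of "y # p"] by simp
  qed
  have "card {e \<in> F. x \<in> e} \<ge> 2" using deg xV by blast
  moreover have finF: "finite F"
    proof (rule finite_subset)
    show "F \<subseteq> Pow V" using V by blast
  qed (use fin in simp)
  ultimately obtain e1 e2 where e12: "e1 \<in> F" "e2 \<in> F" "x \<in> e1" "x \<in> e2" "e1 \<noteq> e2"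
  proof -
    assume r: "\<And>e1 e2. e1 \<in> F \<Longrightarrow> e2 \<in> F \<Longrightarrow> x \<in> e1 \<Longrightarrow> x \<in> e2 \<Longrightarrow> e1 \<noteq> e2 \<Longrightarrow> thesis"
    assume c: "card {e \<in> F. x \<in> e} \<ge> 2"
    show thesis
    proof (rule ccontr)
      assume "\<not> thesis"
      then have "\<forall>a\<in>{e \<in> F. x \<in> e}. \<forall>b\<in>{e \<in> F. x \<in> e}. a = b" using r by blast
      then have "card {e \<in> F. x \<in> e} \<le> Suc 0" using finF by (subst card_le_Suc0_iff_eq) auto
      then show False using c by simp
    qed
  qed
  have oth: "\<exists>y. e = {x, y} \<and> y \<noteq> x" if eF: "e \<in> F" and xe: "x \<in> e" for e
  proof -
    obtain u v where "u \<noteq> v" "e = {u, v}" using bspec[OF edges eF] by blast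
    then show ?thesis using xe by (cases "x = u") (auto simp: insert_commute)
  qed
  obtain y1 where y1: "e1 = {x, y1}" "y1 \<noteq> x" using oth e12 by blast
  obtain y2 where y2: "e2 = {x, y2}" "y2 \<noteq> x" using oth e12 by blast
  have "y1 \<noteq> y2" using y1(1) y2(1) e12(5) by auto
  obtain j1 where j1: "j1 < length p" "p ! j1 = y1" proof -
    have "y1 \<in> set p" using ext[of y1] y1(1) e12(1) by simp
    then show ?thesis using that by (auto simp: in_set_conv_nth)
  qed
  obtain j2 where j2: "j2 < length p" "p ! j2 = y2" proof -
    have "y2 \<in> set p" using ext[of y2] y2(1) e12(2) by simp
    then show ?thesis using that by (auto simp: in_set_conv_nth)
  qed
  have "j1 \<noteq> 0" "j2 \<noteq> 0" "j1 \<noteq> j2" using j1 j2 y1 y2 \<open>y1 \<noteq> y2\<close> x_def by auto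
  then obtain j w where j: "2 \<le> j" "j < length p" "p ! j = w" "{x, w} \<in> F"
  proof (cases "j1 = 1")
    case True
    then have "2 \<le> j2" using \<open>j2 \<noteq> 0\<close> \<open>j1 \<noteq> j2\<close> by linarith
    then show ?thesis using that[of j2 y2] j2 y2(1) e12(2) by simp
  next
    case False
    then have "2 \<le> j1" using \<open>j1 \<noteq> 0\<close> by linarith
    then show ?thesis using that[of j1 y1] j1 y1(1) e12(1) by simp
  qed
  define vs where "vs = take (Suc j) p"
  have lvs: "length vs = Suc j" using j vs_def by simp
  show ?thesis unfolding has_cycle_def
  proof (intro exI[of _ vs] conjI allI impI)
    show "3 \<le> length vs" using lvs j by simp
    show "distinct vs" using p vs_def unfolding gpath_def by simp
    fix i assume i: "i < length vs"
    show "{vs ! i, vs ! ((i + 1) mod length vs)} \<in> F"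
    proof (cases "i = j")
      case True
      then show ?thesis using j lvs vs_def x_def by (simp add: insert_commute)
    next
      case False
      then have "Suc i < Suc j" using i lvs by simp
      then show ?thesis using p j lvs vs_def unfolding gpath_def by auto
    qed
  qed
qed

lemma has_cycle_mono: "has_cycle F \<Longrightarrow> F \<subseteq> G \<Longrightarrow> has_cycle G"
  unfolding has_cycle_def by blast

lemma forest_card:
  assumes "finite V" "\<Union>F \<subseteq> V" "\<forall>e\<in>F. \<exists>u v. u \<noteq> v \<and> e = {u, v}" "\<not> has_cycle F"
  shows "card F \<le> card V"
  using assms
proof (induction "card V" arbitrary: V F)
  case 0
  then have "V = {}" by simp
  then have "F = {}" using 0 by blast
  then show ?case by simp
next
  case (Suc n)
  have finF: "finite F"
  proof (rule finite_subset)
    show "F \<subseteq> Pow V" using Suc.prems(2) by blast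
  qed (use Suc.prems(1) in simp)
  have "\<exists>v\<in>V. card {e \<in> F. v \<in> e} \<le> 1"
  proof (rule ccontr)
    assume "\<not> ?thesis"
    then have "\<forall>v\<in>V. card {e \<in> F. v \<in> e} \<ge> 2" by auto
    moreover obtain v0 where "v0 \<in> V" using Suc.hyps(2) by (metis card.empty ex_in_conv nat.distinct(1))
    ultimately have "has_cycle F" using mindeg_cycle[of V F v0] Suc.prems by blast
    then show False using Suc.prems by blast
  qed
  then obtain v where v: "v \<in> V" "card {e \<in> F. v \<in> e} \<le> 1" by blast
  define F' where "F' = F - {e \<in> F. v \<in> e}"
  have sub: "{e \<in> F. v \<in> e} \<subseteq> F" by blast
  have c1: "card F' = card F - card {e \<in> F. v \<in> e}"
    unfolding F'_def using card_Diff_subset[OF finite_subset[OF sub finF] sub] .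
  have c2: "card {e \<in> F. v \<in> e} \<le> card F" using card_mono[OF finF sub] .
  have "card F = card F' + card {e \<in> F. v \<in> e}" using c1 c2 by linarith
  moreover have "card F' \<le> card (V - {v})"
  proof (rule Suc.hyps(1))
    show "n = card (V - {v})" using Suc.hyps(2) v(1) by simp
    show "finite (V - {v})" using Suc.prems(1) by simp
    show "\<Union>F' \<subseteq> V - {v}" using Suc.prems(2) unfolding F'_def by blast
    show "\<forall>e\<in>F'. \<exists>u v. u \<noteq> v \<and> e = {u, v}" using Suc.prems(3) unfolding F'_def by blast
    show "\<not> has_cycle F'" using Suc.prems(4) has_cycle_mono[of F' F] unfolding F'_def by blast
  qed
  moreover have "card (V - {v}) = n" using Suc.hyps(2) v(1) by simp
  ultimately show ?case using v(2) Suc.hyps(2) by linarith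
qed

lemma single_forest: "\<not> has_cycle {{a, b}}"
proof
  assume "has_cycle {{a, b}}"
  then obtain vs where vs: "length vs \<ge> 3" "distinct vs"
    "\<forall>i < length vs. {vs ! i, vs ! ((i + 1) mod length vs)} \<in> {{a, b}}"
    unfolding has_cycle_def by blast
  have ne: "vs \<noteq> []" using vs(1) by auto
  have "{vs ! 0, vs ! 1} = {a, b}" using ne vs(1) vs(3)[rule_format, of 0] by (simp add: numeral_eq_Suc)
  moreover have "{vs ! 1, vs ! 2} = {a, b}" using vs(1) vs(3)[rule_format, of 1] by (simp add: numeral_eq_Suc)
  moreover have "vs ! 0 \<noteq> vs ! 1" using ne vs(1,2) nth_eq_iff_index_eq[of vs 0 1] by simp
  moreover have "vs ! 0 \<noteq> vs ! 2" using ne vs(1,2) nth_eq_iff_index_eq[of vs 0 2] by simp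
  moreover have "vs ! 1 \<noteq> vs ! 2" using ne vs(1,2) nth_eq_iff_index_eq[of vs 1 2] by simp
  ultimately show False by (auto simp: doubleton_eq_iff)
qed

lemma arboricity_witness:
  assumes "simple_graph E"
  shows "\<exists>Fs :: nat \<Rightarrow> 'a set set. (\<forall>i<arboricity E. forest (Fs i) \<and> Fs i \<subseteq> E) \<and> E = (\<Union>i<arboricity E. Fs i)"
proof -
  have fin: "finite E" using assms unfolding simple_graph_def by blast
  obtain f where f: "bij_betw f {..<card E} E" using ex_bij_betw_nat_finite[OF fin] by (auto simp: atLeast0LessThan)
  have "\<exists>Fs :: nat \<Rightarrow> 'a set set. (\<forall>i<card E. forest (Fs i) \<and> Fs i \<subseteq> E) \<and> E = (\<Union>i<card E. Fs i)"
  proof (intro exI[of _ "\<lambda>i. {f i}"] conjI allI impI)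
    fix i assume i: "i < card E"
    then have "f i \<in> E" using bij_betwE[OF f] by simp
    then obtain u v where "f i = {u, v}" using assms unfolding simple_graph_def by blast
    then show "forest {f i}" unfolding forest_def using single_forest by simp
    show "{f i} \<subseteq> E" using \<open>f i \<in> E\<close> by simp
  next
    have img: "f ` {..<card E} = E" using f by (simp add: bij_betw_def)
    show "E = (\<Union>i<card E. {f i})" using img by blast
  qed
  then show ?thesis unfolding arboricity_def by (rule LeastI[where P="\<lambda>k. \<exists>Fs :: nat \<Rightarrow> 'a set set. (\<forall>i<k. forest (Fs i) \<and> Fs i \<subseteq> E) \<and> E = (\<Union>i<k. Fs i)"])
qed


lemma final_real:
  fixes eps tt g :: real
  assumes "0 < eps" "eps < 1" "0 < tt" "tt powr (1/3) \<le> g"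
  shows "eps * tt / g \<le> (eps * tt) powr (2/3)"
proof -
  define c where "c = tt powr (1/3)"
  have c0: "0 < c" using assms c_def by simp
  have tc: "tt = c ^ 3"
    unfolding c_def using assms(3) by (simp add: powr_realpow[symmetric] powr_powr)
  have t23: "tt powr (2/3) = c ^ 2"
    unfolding c_def using assms(3) by (simp add: powr_realpow[symmetric] powr_powr)
  have e: "eps \<le> eps powr (2/3)"
  proof -
    have "eps powr 1 \<le> eps powr (2/3)" using assms by (intro powr_mono') auto
    then show ?thesis using assms by simp
  qed
  have "eps * tt / g \<le> eps * tt / c"
  proof (rule divide_left_mono)
    show "c \<le> g" using assms c_def by simp
    show "0 \<le> eps * tt" using assms by simp
    have "0 < g" using c0 c_def assms(4) by linarith
    then show "0 < g * c" using c0 by simp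
  qed
  also have "\<dots> = eps * c ^ 2" using c0 tc by (simp add: power3_eq_cube power2_eq_square)
  also have "\<dots> \<le> eps powr (2/3) * c ^ 2" using e by (intro mult_right_mono) auto
  also have "\<dots> = (eps * tt) powr (2/3)" using assms t23 by (simp add: powr_mult)
  finally show ?thesis .
qed


lemma card_swap:
  assumes "finite A" "finite B"
  shows "(\<Sum>a\<in>A. card {b \<in> B. R a b}) = (\<Sum>b\<in>B. card {a \<in> A. R a b})"
proof -
  have "(\<Sum>a\<in>A. card {b \<in> B. R a b}) = (\<Sum>a\<in>A. \<Sum>b\<in>B. if R a b then 1 else 0)"
    using assms by (simp add: sum.inter_filter[symmetric])
  also have "\<dots> = (\<Sum>b\<in>B. \<Sum>a\<in>A. if R a b then 1 else 0)" by (rule sum.swap)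
  also have "\<dots> = (\<Sum>b\<in>B. card {a \<in> A. R a b})"
    using assms by (simp add: sum.inter_filter[symmetric])
  finally show ?thesis .
qed

lemma handshake:
  assumes "simple_graph E"
  shows "(\<Sum>v\<in>\<Union>E. vdeg E v) = 2 * card E"
proof -
  have fE: "finite E" using assms unfolding simple_graph_def by blast
  have fU: "finite (\<Union>E)" using assms unfolding simple_graph_def by auto
  have "(\<Sum>v\<in>\<Union>E. vdeg E v) = (\<Sum>e\<in>E. card {v \<in> \<Union>E. v \<in> e})"
    unfolding vdeg_def using card_swap[OF fU fE, of "\<lambda>v e. v \<in> e"] by simp
  also have "\<dots> = (\<Sum>e\<in>E. 2)"
  proof (rule sum.cong)
    fix e assume e: "e \<in> E"
    then obtain u v where "u \<noteq> v" "e = {u, v}" using assms unfolding simple_graph_def by blast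
    moreover have "{x \<in> \<Union>E. x \<in> e} = e" using e by blast
    ultimately show "card {v \<in> \<Union>E. v \<in> e} = 2" by simp
  qed simp
  finally show ?thesis by simp
qed

lemma triangles_fin:
  assumes "simple_graph E"
  shows "finite (triangles E)"
proof (rule finite_subset)
  show "triangles E \<subseteq> Pow (\<Union>E)"
  proof
    fix T assume T: "T \<in> triangles E"
    then have c3: "card T = 3" and ed: "\<forall>x\<in>T. \<forall>y\<in>T. x \<noteq> y \<longrightarrow> {x, y} \<in> E"
      unfolding triangles_def by auto
    have "x \<in> \<Union>E" if x: "x \<in> T" for x
    proof -
      obtain a b c where abc: "T = {a, b, c}" "a \<noteq> b" "b \<noteq> c" "a \<noteq> c"
        using c3[unfolded card_3_iff] by blast
      have "\<exists>y\<in>T. y \<noteq> x"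
      proof (cases "x = a")
        case True
        then show ?thesis using abc by auto
      next
        case False
        then show ?thesis using abc by auto
      qed
      then obtain y where y: "y \<in> T" "y \<noteq> x" by blast
      have "{x, y} \<in> E" using ed x y by simp
      then show ?thesis by auto
    qed
    then show "T \<in> Pow (\<Union>E)" by blast
  qed
  show "finite (Pow (\<Union>E))" using assms unfolding simple_graph_def by auto
qed

lemma tri_edges_le3:
  assumes "simple_graph E" "T \<in> triangles E"
  shows "card {e \<in> E. e \<subseteq> T} \<le> 3"
proof -
  have "card T = 3" using assms unfolding triangles_def by auto
  then obtain a b c where abc: "T = {a, b, c}" unfolding card_3_iff by blast
  have "{e \<in> E. e \<subseteq> T} \<subseteq> {{a, b}, {a, c}, {b, c}}"
  proof
    fix e assume e: "e \<in> {e \<in> E. e \<subseteq> T}"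
    then obtain u v where uv: "u \<noteq> v" "e = {u, v}" using assms(1) unfolding simple_graph_def by blast
    then have "u \<in> {a, b, c}" "v \<in> {a, b, c}" using e abc by auto
    then show "e \<in> {{a, b}, {a, c}, {b, c}}" using uv by (auto simp: insert_commute)
  qed
  then have "card {e \<in> E. e \<subseteq> T} \<le> card {{a, b}, {a, c}, {b, c}}" by (intro card_mono) auto
  also have "\<dots> \<le> 3"
    by (simp add: card_insert_if)
  finally show ?thesis .
qed

lemma tri_sum:
  assumes "simple_graph E"
  shows "(\<Sum>e\<in>E. etri E e) \<le> 3 * card (triangles E)"
proof -
  have fE: "finite E" using assms unfolding simple_graph_def by blast
  have "(\<Sum>e\<in>E. etri E e) = (\<Sum>T\<in>triangles E. card {e \<in> E. e \<subseteq> T})"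
    unfolding etri_def using card_swap[OF fE triangles_fin[OF assms], of "\<lambda>e T. e \<subseteq> T"] by simp
  also have "\<dots> \<le> (\<Sum>T\<in>triangles E. 3)" using tri_edges_le3[OF assms] by (intro sum_mono) auto
  finally show ?thesis by simp
qed



lemma Hd_bound:
  assumes sg: "simple_graph E" and "0 < eps" "0 < tt"
    and ag: "real (arboricity E) \<le> g" and gpos: "0 < g"
  shows "real (card {e \<in> E. real (edeg E e) > 8 * real (card E) * g^2 / (eps * tt)}) \<le> eps * tt / (4 * g)"
proof (cases "E = {}")
  case True
  then show ?thesis using assms by simp
next
  case False
  define m where "m = real (card E)"
  define \<tau> where "\<tau> = 8 * m * g^2 / (eps * tt)"
  define U where "U = \<Union>E"
  define S where "S = {v \<in> U. real (vdeg E v) > \<tau>}"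
  define k where "k = arboricity E"
  have fE: "finite E" using sg unfolding simple_graph_def by blast
  have fU: "finite U" using sg unfolding simple_graph_def U_def by auto
  have fS: "finite S" using fU S_def by simp
  have m0: "0 < m" using False fE m_def by (simp add: card_gt_0_iff)
  have t0: "0 < \<tau>" using m0 assms unfolding \<tau>_def by simp
  have "real (card S) * \<tau> = (\<Sum>v\<in>S. \<tau>)" by simp
  also have "\<dots> \<le> (\<Sum>v\<in>S. real (vdeg E v))" using S_def by (intro sum_mono) auto
  also have "\<dots> \<le> (\<Sum>v\<in>U. real (vdeg E v))" using fU S_def by (intro sum_mono2) auto
  also have "\<dots> = real (\<Sum>v\<in>U. vdeg E v)" by simp
  also have "\<dots> = 2 * m" using handshake[OF sg] U_def m_def by simp
  finally have cS: "real (card S) * \<tau> \<le> 2 * m" .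
  define ES where "ES = {e \<in> E. e \<subseteq> S}"
  have sub: "{e \<in> E. real (edeg E e) > \<tau>} \<subseteq> ES"
  proof
    fix e assume e: "e \<in> {e \<in> E. real (edeg E e) > \<tau>}"
    then obtain u v where uv: "u \<noteq> v" "e = {u, v}" using sg unfolding simple_graph_def by blast
    have "edeg E e = min (vdeg E u) (vdeg E v)" unfolding edeg_def uv by simp
    then have "real (vdeg E u) > \<tau>" "real (vdeg E v) > \<tau>" using e by auto
    moreover have "u \<in> U" "v \<in> U" using e uv U_def by auto
    ultimately show "e \<in> ES" using e uv unfolding ES_def S_def by auto
  qed
  obtain Fs where Fs: "\<forall>i<k. forest (Fs i) \<and> Fs i \<subseteq> E" "E = (\<Union>i<k. Fs i)"
    using arboricity_witness[OF sg] k_def by blast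
  have "ES = (\<Union>i<k. Fs i \<inter> ES)" using Fs(2) ES_def by blast
  then have "card ES \<le> (\<Sum>i<k. card (Fs i \<inter> ES))" by (metis card_UN_le finite_lessThan)
  also have "\<dots> \<le> (\<Sum>i<k. card S)"
  proof (rule sum_mono)
    fix i assume "i \<in> {..<k}"
    then have fi: "forest (Fs i)" "Fs i \<subseteq> E" using Fs(1) by auto
    show "card (Fs i \<inter> ES) \<le> card S"
    proof (rule forest_card)
      show "finite S" by (rule fS)
      show "\<Union>(Fs i \<inter> ES) \<subseteq> S" unfolding ES_def by blast
      show "\<forall>e\<in>Fs i \<inter> ES. \<exists>u v. u \<noteq> v \<and> e = {u, v}" using sg fi unfolding simple_graph_def ES_def by blast
      show "\<not> has_cycle (Fs i \<inter> ES)" using fi(1) has_cycle_mono[of "Fs i \<inter> ES" "Fs i"] unfolding forest_def by blast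
    qed
  qed
  also have "\<dots> = k * card S" by simp
  finally have cES: "card ES \<le> k * card S" .
  have "card {e \<in> E. real (edeg E e) > \<tau>} \<le> card ES"
    using sub fE ES_def by (intro card_mono) auto
  then have "real (card {e \<in> E. real (edeg E e) > \<tau>}) \<le> real k * real (card S)"
    using cES by (metis of_nat_le_iff of_nat_mult le_trans)
  also have "\<dots> \<le> g * (2 * m / \<tau>)"
  proof (rule mult_mono)
    show "real k \<le> g" using ag k_def by simp
    show "real (card S) \<le> 2 * m / \<tau>" using cS t0 by (simp add: pos_le_divide_eq)
  qed (use gpos in auto)
  also have "\<dots> = eps * tt / (4 * g)"
    unfolding \<tau>_def using m0 gpos assms by (simp add: field_simps power2_eq_square)
  finally show ?thesis unfolding \<tau>_def m_def .
qed

lemma Ht_bound: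
  assumes sg: "simple_graph E" and "0 < eps" and tt: "real (card (triangles E)) / 4 \<le> tt"
    and gpos: "0 < g"
  shows "real (card {e \<in> E. real (etri E e) > 12 * g / eps}) \<le> eps * tt / g"
proof -
  define \<tau> where "\<tau> = 12 * g / eps"
  define H where "H = {e \<in> E. real (etri E e) > \<tau>}"
  have fE: "finite E" using sg unfolding simple_graph_def by blast
  have t0: "0 < \<tau>" using assms \<tau>_def by simp
  have "real (card H) * \<tau> = (\<Sum>e\<in>H. \<tau>)" by simp
  also have "\<dots> \<le> (\<Sum>e\<in>H. real (etri E e))" using H_def by (intro sum_mono) auto
  also have "\<dots> \<le> (\<Sum>e\<in>E. real (etri E e))" using fE H_def by (intro sum_mono2) auto
  also have "\<dots> = real (\<Sum>e\<in>E. etri E e)" by simp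
  also have "\<dots> \<le> real (3 * card (triangles E))" using tri_sum[OF sg] by (simp only: of_nat_le_iff)
  also have "\<dots> \<le> 12 * tt" using tt by simp
  finally have "real (card H) * \<tau> \<le> 12 * tt" .
  then have "real (card H) \<le> 12 * tt / \<tau>" using t0 by (simp add: pos_le_divide_eq)
  also have "\<dots> = eps * tt / g" unfolding \<tau>_def using assms by (simp add: field_simps)
  finally show ?thesis unfolding H_def \<tau>_def .
qed

theorem claim3p4:
  fixes E :: "'a set set" and eps tt :: real and alpha_t :: nat
  assumes "simple_graph E"
    and "0 < eps" "eps < 1"
    and "0 < alpha_t"
    and "0 < tt"
    and "alpha_t > arboricity E"
    and "real (card (triangles E)) / 4 \<le> tt" "tt \<le> real (card (triangles E))"
  shows "let m = real (card E);
             \<gamma> = max (real alpha_t) (tt powr (1/3));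
             \<tau>d = 8 * m * \<gamma>^2 / (eps * tt);
             \<tau>t = 12 * \<gamma> / eps;
             Hd = {e \<in> E. real (edeg E e) > \<tau>d};
             Ht = {e \<in> E. real (etri E e) > \<tau>t}
         in real (card Hd) \<le> (eps * tt) powr (2/3) \<and> real (card Ht) \<le> (eps * tt) powr (2/3)"
proof -
  define g where "g = max (real alpha_t) (tt powr (1/3))"
  have g3: "tt powr (1/3) \<le> g" unfolding g_def by simp
  have gpos: "0 < g" using assms(5) g3 by (smt (verit) powr_gt_zero)
  have ag: "real (arboricity E) \<le> g" using assms(6) unfolding g_def by simp
  have fin: "eps * tt / g \<le> (eps * tt) powr (2/3)" using final_real[OF assms(2,3,5) g3] .
  have "eps * tt / (4 * g) \<le> eps * tt / g" using assms gpos by (simp add: field_simps)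
  then have 1: "real (card {e \<in> E. real (edeg E e) > 8 * real (card E) * g^2 / (eps * tt)}) \<le> (eps * tt) powr (2/3)"
    using Hd_bound[OF assms(1,2,5) ag gpos] fin by linarith
  have 2: "real (card {e \<in> E. real (etri E e) > 12 * g / eps}) \<le> (eps * tt) powr (2/3)"
    using Ht_bound[OF assms(1,2,7) gpos] fin by linarith
  show ?thesis using 1 2 unfolding g_def Let_def by simp
qed


end
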